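(* Let $A=\mathbb{Q}[X]$, $K=\mathbb{Q}(X)$, $B=A[T,Y,Z]=A^{[3]}$, and let $D\in\operatorname{LND}_A(B)$ be defined by $D(T)=0$, $D(Y)=X$, $D(Z)=Y$. Then $\operatorname{rank} D=2$, $\operatorname{rank} D_K=1$, and $D$ is not rigid: both $(T,Y,Z)$ and $(T',Y,Z)$ with $T'=T-Y^2+2XZ$ lie in $\Gamma_D(B)$, but $A[T]\neq A[T']$.
   Context: $D_K$ is the extension of $D$ to $K^{[3]}=K[T,Y,Z]$. If $B=A^{[n]}$, a coordinate system of $B$ over $A$ is an ordered $n$-tuple $(X_1,\dots,X_n)$ of elements of $B$ with $A[X_1,\dots,X_n]=B$; $\Gamma(B)$ denotes the set of all such. $\operatorname{LND}_A(B)$ is the set of locally nilpotent $A$-derivations of $B$. The rank of $D$ is the least integer $r\ge 0$ such that there is a coordinate system $(X_1,\dots,X_n)$ of $B$ over $A$ with $A[X_1,\dots,X_{n-r}]\subset\ker D$. For $D$ of rank $r$, $\Gamma_D(B)$ is the set of $(X_1,\dots,X_n)\in\Gamma(B)$ with $A[X_1,\dots,X_{n-r}]\subset \ker D$. $D$ is rigid if $A[X_1,\dots,X_{n-r}]=A[X_1',\dots,X_{n-r}']$ whenever $(X_1,\dots,X_n)$ and $(X_1',\dots,X_n')$ both belong to $\Gamma_D(B)$. *)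

theory Defs
  imports "HOL-Computational_Algebra.Polynomial" "HOL-Computational_Algebra.Fraction_Field"
begin

text \<open>A polynomial ring R[T,Y,Z] over a commutative ring R is modelled as the nested
 polynomial type R poly poly poly: T is the innermost variable, Y the middle, Z the outermost.\<close>

definition cst3 :: "'a::comm_ring_1 \<Rightarrow> 'a poly poly poly" where
  "cst3 c = [:[:[:c:]:]:]"

definition varT :: "'a::comm_ring_1 poly poly poly" where
  "varT = [:[:[:0, 1:]:]:]"

definition varY :: "'a::comm_ring_1 poly poly poly" where
  "varY = [:[:0, 1:]:]"

definition varZ :: "'a::comm_ring_1 poly poly poly" where
  "varZ = [:0, 1:]"

inductive_set alg_gen :: "('a \<Rightarrow> 'b::comm_ring_1) \<Rightarrow> 'b set \<Rightarrow> 'b set"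
  for emb :: "'a \<Rightarrow> 'b" and S :: "'b set" where
  base: "a \<in> range emb \<Longrightarrow> a \<in> alg_gen emb S"
| gen: "s \<in> S \<Longrightarrow> s \<in> alg_gen emb S"
| add: "x \<in> alg_gen emb S \<Longrightarrow> y \<in> alg_gen emb S \<Longrightarrow> x + y \<in> alg_gen emb S"
| mult: "x \<in> alg_gen emb S \<Longrightarrow> y \<in> alg_gen emb S \<Longrightarrow> x * y \<in> alg_gen emb S"

definition coord_sys :: "('a \<Rightarrow> 'b::comm_ring_1) \<Rightarrow> nat \<Rightarrow> 'b list \<Rightarrow> bool" where
  "coord_sys emb n xs \<longleftrightarrow> length xs = n \<and> alg_gen emb (set xs) = UNIV"

definition ker :: "('b \<Rightarrow> 'b::zero) \<Rightarrow> 'b set" where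
  "ker D = {b. D b = 0}"

definition der_rank :: "('a \<Rightarrow> 'b::comm_ring_1) \<Rightarrow> nat \<Rightarrow> ('b \<Rightarrow> 'b) \<Rightarrow> nat" where
  "der_rank emb n D = (LEAST r. \<exists>xs. coord_sys emb n xs \<and> set (take (n - r) xs) \<subseteq> ker D)"

definition Gamma_D :: "('a \<Rightarrow> 'b::comm_ring_1) \<Rightarrow> nat \<Rightarrow> ('b \<Rightarrow> 'b) \<Rightarrow> 'b list set" where
  "Gamma_D emb n D = {xs. coord_sys emb n xs \<and> set (take (n - der_rank emb n D) xs) \<subseteq> ker D}"

definition rigid :: "('a \<Rightarrow> 'b::comm_ring_1) \<Rightarrow> nat \<Rightarrow> ('b \<Rightarrow> 'b) \<Rightarrow> bool" where
  "rigid emb n D \<longleftrightarrow> (\<forall>xs \<in> Gamma_D emb n D. \<forall>ys \<in> Gamma_D emb n D.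
     alg_gen emb (set (take (n - der_rank emb n D) xs)) =
     alg_gen emb (set (take (n - der_rank emb n D) ys)))"

definition dY :: "'a::idom poly poly poly \<Rightarrow> 'a poly poly poly" where
  "dY f = map_poly pderiv f"

definition dZ :: "'a::idom poly poly poly \<Rightarrow> 'a poly poly poly" where
  "dZ f = pderiv f"

definition Dx :: "'a::idom \<Rightarrow> 'a poly poly poly \<Rightarrow> 'a poly poly poly" where
  "Dx x f = cst3 x * dY f + varY * dZ f"

text \<open>A = Q[X], with X = [:0,1:]; K = Q(X) = fraction field of A.\<close>
type_synonym ringA = "rat poly"
type_synonym ringB = "rat poly poly poly poly"
type_synonym ringBK = "rat poly fract poly poly poly"

definition D_A :: "ringB \<Rightarrow> ringB" where
  "D_A = Dx [:0, 1:]"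

definition D_K :: "ringBK \<Rightarrow> ringBK" where
  "D_K = Dx (Fract [:0, 1:] 1)"

end

theory Submission
  imports Defs
begin

lemma pderiv_sum': "pderiv (sum f A) = (\<Sum>i\<in>A. pderiv (f i))"
  by (induct A rule: infinite_finite_induct) (auto simp: pderiv_add)

lemma dY_add: "dY (f + g) = dY f + dY g"
  unfolding dY_def by (rule poly_eqI) (simp add: coeff_map_poly pderiv_add)

lemma dY_mult: "dY (f * g) = f * dY g + dY f * g"
  unfolding dY_def
proof (rule poly_eqI)
  fix n
  show "coeff (map_poly pderiv (f * g)) n = coeff (f * map_poly pderiv g + map_poly pderiv f * g) n"
    unfolding coeff_add coeff_map_poly[of pderiv, OF pderiv_0] coeff_mult pderiv_sum' pderiv_mult sum.distrib
    by (simp add: mult.commute)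
qed

lemma Dx_add: "Dx x (f + g) = Dx x f + Dx x g"
  unfolding Dx_def dZ_def by (simp add: dY_add pderiv_add algebra_simps)

lemma Dx_mult: "Dx x (f * g) = f * Dx x g + g * Dx x f"
  unfolding Dx_def dZ_def by (simp add: dY_mult pderiv_mult algebra_simps)

lemma Dx_cst3: "Dx x (cst3 c) = 0"
  by (simp add: Dx_def dY_def dZ_def cst3_def map_poly_pCons)
lemma Dx_T: "Dx x varT = 0"
  by (simp add: Dx_def dY_def dZ_def varT_def map_poly_pCons)
lemma Dx_Y: "Dx x varY = cst3 x"
  by (simp add: Dx_def dY_def dZ_def varY_def pderiv_pCons map_poly_pCons flip: one_pCons)
lemma Dx_Z: "Dx x varZ = varY"
  by (simp add: Dx_def dY_def dZ_def varZ_def pderiv_pCons map_poly_pCons)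

lemma Dx_minus: "Dx x (- f) = - Dx x f"
proof -
  have "Dx x (f + - f) = 0" by (simp add: Dx_def dY_def dZ_def)
  thus ?thesis unfolding Dx_add by (simp add: add_eq_0_iff)
qed

lemma Dx_diff: "Dx x (f - g) = Dx x f - Dx x g"
  using Dx_add[of x f "-g"] Dx_minus[of x g] by simp


lemma alg_gen_mono_gen:
  assumes "S \<subseteq> alg_gen e T" shows "alg_gen e S \<subseteq> alg_gen e T"
proof
  fix b assume "b \<in> alg_gen e S" thus "b \<in> alg_gen e T"
    by induct (use assms in \<open>auto intro: alg_gen.intros\<close>)
qed

lemma cst3_m1: "cst3 (-1) = (-1 :: 'a::comm_ring_1 poly poly poly)"
  by (simp add: cst3_def one_pCons)

lemma alg_gen_diff:
  assumes "a \<in> alg_gen (cst3::'a::comm_ring_1 \<Rightarrow> _) S" "b \<in> alg_gen cst3 S"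
  shows "a - b \<in> alg_gen cst3 S"
proof -
  have "cst3 (-1) \<in> alg_gen (cst3::'a \<Rightarrow> _) S" by (rule alg_gen.base) simp
  hence "a + cst3 (-1) * b \<in> alg_gen cst3 S" using assms by (auto intro: alg_gen.intros)
  thus ?thesis by (simp add: cst3_m1)
qed

lemma gen_TYZ: "alg_gen (cst3::'a::comm_ring_1 \<Rightarrow> _) {varT, varY, varZ} = UNIV"
proof -
  let ?S = "alg_gen (cst3::'a::comm_ring_1 \<Rightarrow> _) {varT, varY, varZ}"
  have T: "varT \<in> ?S" "varY \<in> ?S" "varZ \<in> ?S" by (auto intro: alg_gen.gen)
  have L1: "[:[:t:]:] \<in> ?S" for t
  proof (induct t)
    case 0 have "cst3 0 \<in> ?S" by (rule alg_gen.base) simp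
    moreover have "cst3 0 = (0::'a poly poly poly)" by (simp add: cst3_def)
    ultimately show ?case by simp
  next
    case (pCons a t)
    have "cst3 a + varT * [:[:t:]:] \<in> ?S"
      by (intro alg_gen.add alg_gen.mult T pCons(2)) (rule alg_gen.base, simp)
    moreover have "cst3 a + varT * [:[:t:]:] = [:[:pCons a t:]:]"
      by (simp add: cst3_def varT_def)
    ultimately show ?case by simp
  qed
  have L2: "[:y:] \<in> ?S" for y
  proof (induct y)
    case 0 show ?case using L1[of 0] by simp
  next
    case (pCons a t)
    have "[:[:a:]:] + varY * [:t:] \<in> ?S"
      by (intro alg_gen.add alg_gen.mult T pCons(2) L1)
    moreover have "[:[:a:]:] + varY * [:t:] = [:pCons a t:]"
      by (simp add: varY_def)
    ultimately show ?case by simp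
  qed
  have L3: "z \<in> ?S" for z
  proof (induct z)
    case 0 show ?case using L2[of 0] by simp
  next
    case (pCons a t)
    have "[:a:] + varZ * t \<in> ?S"
      by (intro alg_gen.add alg_gen.mult T pCons(2) L2)
    moreover have "[:a:] + varZ * t = pCons a t"
      by (simp add: varZ_def)
    ultimately show ?case by simp
  qed
  show ?thesis using L3 by auto
qed


lemma set3: "length xs = 3 \<Longrightarrow> set xs = {xs!0, xs!1, xs!2}"
  by (cases xs; cases "tl xs"; cases "tl (tl xs)") (auto simp: numeral_3_eq_3)

lemma ideal_lemma:
  fixes x :: "'a::idom"
  assumes cs: "coord_sys (cst3::'a \<Rightarrow> _) 3 xs" and k0: "Dx x (xs!0) = 0" and k1: "Dx x (xs!1) = 0"
  shows "\<exists>c. Dx x b = Dx x (xs!2) * c"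
proof -
  have "b \<in> alg_gen cst3 (set xs)" using cs by (simp add: coord_sys_def)
  thus ?thesis
  proof induct
    case (base a) thus ?case by (auto simp: Dx_cst3)
  next
    case (gen s)
    hence "s = xs!0 \<or> s = xs!1 \<or> s = xs!2" using set3[of xs] cs by (auto simp: coord_sys_def)
    thus ?case using k0 k1 by (metis mult_1_right mult_zero_right)
  next
    case (add a b)
    then obtain c1 c2 where "Dx x a = Dx x (xs!2) * c1" "Dx x b = Dx x (xs!2) * c2" by blast
    thus ?case by (intro exI[of _ "c1 + c2"]) (simp add: Dx_add algebra_simps)
  next
    case (mult a b)
    then obtain c1 c2 where "Dx x a = Dx x (xs!2) * c1" "Dx x b = Dx x (xs!2) * c2" by blast
    thus ?case by (intro exI[of _ "a * c2 + b * c1"]) (simp add: Dx_mult algebra_simps)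
  qed
qed

lemma all_ker:
  fixes x :: "'a::idom"
  assumes cs: "coord_sys (cst3::'a \<Rightarrow> _) n xs" and k: "\<forall>s\<in>set xs. Dx x s = 0"
  shows "Dx x b = 0"
proof -
  have "b \<in> alg_gen cst3 (set xs)" using cs by (simp add: coord_sys_def)
  thus ?thesis
    by induct (use k in \<open>auto simp: Dx_cst3 Dx_add Dx_mult\<close>)
qed

lemma const_factor:
  fixes p q :: "'a::idom poly"
  assumes "p * q = [:c:]" "c \<noteq> 0"
  shows "p = [:coeff p 0:] \<and> q = [:coeff q 0:] \<and> coeff p 0 * coeff q 0 = c"
proof -
  have nz: "p \<noteq> 0" "q \<noteq> 0" using assms by auto
  have "degree p + degree q = 0" using degree_mult_eq[OF nz] assms by simp
  hence dp: "p = [:coeff p 0:]" and dq: "q = [:coeff q 0:]" by (auto simp: degree_0_id)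
  have "[:coeff p 0 * coeff q 0:] = [:c:]"
    using assms(1) dp dq by (metis (no_types) mult_pCons_left mult_zero_left add_0_right smult_pCons smult_0_right pCons_0_0)
  thus ?thesis using dp dq by simp
qed

lemma no_rank1:
  fixes x :: "'a::idom"
  assumes xnz: "x \<noteq> 0" and nu: "\<not> x dvd 1"
    and cs: "coord_sys (cst3::'a \<Rightarrow> _) 3 xs" and k0: "Dx x (xs!0) = 0" and k1: "Dx x (xs!1) = 0"
  shows False
proof -
  define h where "h = Dx x (xs!2)"
  obtain u where u: "cst3 x = h * u" using ideal_lemma[OF cs k0 k1, of varY] by (auto simp: Dx_Y h_def)
  obtain v where v: "varY = h * v" using ideal_lemma[OF cs k0 k1, of varZ] by (auto simp: Dx_Z h_def)
  have "h * u = [:[:[:x:]:]:]" using u by (simp add: cst3_def)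
  from const_factor[OF this] xnz obtain h1 u1 where h1: "h = [:h1:]" "h1 * u1 = [:[:x:]:]" by auto
  from const_factor[OF h1(2)] xnz obtain h2 u2 where h2: "h1 = [:h2:]" "h2 * u2 = [:x:]" by auto
  from const_factor[OF h2(2)] xnz obtain h0 where h0: "h2 = [:h0:]" by auto
  have hc: "h = cst3 h0" using h1 h2 h0 by (simp add: cst3_def)
  have "coeff (coeff (coeff (h * v) 0) 1) 0 = coeff (coeff (coeff varY 0) 1) 0" using v by simp
  hence "h0 * coeff (coeff (coeff v 0) 1) 0 = 1" by (simp add: hc cst3_def varY_def)
  hence hu: "h0 dvd 1" by (metis dvd_triv_left)
  have "h = cst3 x * dY (xs!2) + varY * dZ (xs!2)" by (simp add: h_def Dx_def)
  hence "coeff (coeff (coeff h 0) 0) 0 = coeff (coeff (coeff (cst3 x * dY (xs!2) + varY * dZ (xs!2)) 0) 0) 0"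
    by simp
  hence "h0 = x * coeff (coeff (coeff (dY (xs!2)) 0) 0) 0" by (simp add: hc cst3_def varY_def)
  hence "x dvd h0" by simp
  with hu nu show False using dvd_trans by blast
qed


lemma Dx_2: "Dx x (2::'a::idom poly poly poly) = 0"
proof -
  have "cst3 1 = (1::'a poly poly poly)" by (simp add: cst3_def one_pCons)
  hence "Dx x (1::'a poly poly poly) = 0" using Dx_cst3[of x 1] by simp
  thus ?thesis using Dx_add[of x 1 1] by (simp only: one_add_one add_0_right)
qed

lemma DT': "Dx x (varT - varY ^ 2 + 2 * cst3 x * varZ) = 0"
  unfolding power2_eq_square mult_2
  by (simp add: Dx_diff Dx_add Dx_mult Dx_T Dx_Y Dx_Z Dx_cst3 Dx_2 algebra_simps)

lemma X_facts: "([:0,1:] :: rat poly) \<noteq> 0" "\<not> ([:0,1:] :: rat poly) dvd 1"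
  by (auto simp: is_unit_iff_degree)

lemma gen_T': "alg_gen (cst3::'a::comm_ring_1 \<Rightarrow> _) {varT - varY ^ 2 + 2 * cst3 x * varZ, varY, varZ} = UNIV"
proof -
  let ?S = "alg_gen (cst3::'a \<Rightarrow> _) {varT - varY ^ 2 + 2 * cst3 x * varZ, varY, varZ}"
  have g: "varT - varY ^ 2 + 2 * cst3 x * varZ \<in> ?S" "varY \<in> ?S" "varZ \<in> ?S" by (auto intro: alg_gen.gen)
  have c2: "2 * cst3 x \<in> ?S" by (rule alg_gen.base) (simp add: cst3_def numeral_poly)
  have "(varT - varY ^ 2 + 2 * cst3 x * varZ) - (2 * cst3 x * varZ - varY * varY) \<in> ?S"
    by (intro alg_gen_diff alg_gen.mult g c2)
  hence "varT \<in> ?S" by (simp add: power2_eq_square)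
  hence "{varT, varY, varZ} \<subseteq> ?S" using g by auto
  from alg_gen_mono_gen[OF this] show ?thesis using gen_TYZ by auto
qed

lemma gen_K:
  "alg_gen (cst3::'a::comm_ring_1 \<Rightarrow> _) {varT, varZ - cst3 c * varY ^ 2, varY} = UNIV"
proof -
  let ?S = "alg_gen (cst3::'a \<Rightarrow> _) {varT, varZ - cst3 c * varY ^ 2, varY}"
  have g: "varT \<in> ?S" "varZ - cst3 c * varY ^ 2 \<in> ?S" "varY \<in> ?S" by (auto intro: alg_gen.gen)
  have c: "cst3 c \<in> ?S" by (rule alg_gen.base) simp
  have "(varZ - cst3 c * varY ^ 2) + cst3 c * (varY * varY) \<in> ?S"
    by (intro alg_gen.add alg_gen.mult g c)
  hence "varZ \<in> ?S" by (simp add: power2_eq_square)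
  hence "{varT, varY, varZ} \<subseteq> ?S" using g by auto
  from alg_gen_mono_gen[OF this] show ?thesis using gen_TYZ by auto
qed

lemma coord_TYZ: "coord_sys (cst3::'a::comm_ring_1 \<Rightarrow> _) 3 [varT, varY, varZ]"
  by (simp add: coord_sys_def gen_TYZ)

lemma rank_A: "der_rank (cst3 :: ringA \<Rightarrow> ringB) 3 D_A = 2"
  unfolding der_rank_def
proof (rule Least_equality)
  show "\<exists>xs. coord_sys (cst3 :: ringA \<Rightarrow> ringB) 3 xs \<and> set (take (3 - 2) xs) \<subseteq> ker D_A"
    by (intro exI[of _ "[varT, varY, varZ]"]) (simp add: coord_TYZ ker_def D_A_def Dx_T)
next
  fix r assume "\<exists>xs. coord_sys (cst3 :: ringA \<Rightarrow> ringB) 3 xs \<and> set (take (3 - r) xs) \<subseteq> ker D_A"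
  then obtain xs where cs: "coord_sys (cst3 :: ringA \<Rightarrow> ringB) 3 xs" and k: "set (take (3 - r) xs) \<subseteq> ker D_A"
    by blast
  show "2 \<le> r"
  proof (rule ccontr)
    assume "\<not> 2 \<le> r"
    hence "set (take 2 xs) \<subseteq> set (take (3 - r) xs)"
      by (intro set_take_subset_set_take) simp
    moreover have "length xs = 3" using cs by (simp add: coord_sys_def)
    moreover obtain a b c where "xs = [a,b,c]" using \<open>length xs = 3\<close>
      by (auto simp: numeral_3_eq_3 length_Suc_conv)
    ultimately have "xs!0 \<in> ker D_A" "xs!1 \<in> ker D_A" using k by (simp_all add: subset_iff)
    hence "Dx [:0,1:] (xs!0) = 0" "Dx [:0,1:] (xs!1) = 0" by (auto simp: ker_def D_A_def)
    from no_rank1[OF X_facts cs this] show False .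
  qed
qed


lemma cst3_mult: "cst3 (a * b) = cst3 a * (cst3 b :: 'a::comm_ring_1 poly poly poly)"
  by (simp add: cst3_def)
lemma cst3_add: "cst3 (a + b) = cst3 a + (cst3 b :: 'a::comm_ring_1 poly poly poly)"
  by (simp add: cst3_def)
lemma cst3_1: "cst3 1 = (1 :: 'a::comm_ring_1 poly poly poly)"
  by (simp add: cst3_def one_pCons)
lemma cst3_eq0: "cst3 a = (0 :: 'a::comm_ring_1 poly poly poly) \<longleftrightarrow> a = 0"
  by (simp add: cst3_def)

lemma fract_half: "Fract (1::rat poly) [:0,2:] * Fract [:0,1:] 1 + Fract 1 [:0,2:] * Fract [:0,1:] 1 = 1"
  by (simp add: mult_fract add_fract eq_fract One_fract_def)

lemma DK_Z': "D_K (varZ - cst3 (Fract 1 [:0,2:]) * varY ^ 2) = 0"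
proof -
  let ?c = "Fract (1::rat poly) [:0,2:]" and ?x = "Fract (1::rat poly) [:0,2:]"
  have "D_K (varZ - cst3 ?c * varY ^ 2)
     = varY - varY * (cst3 ?c * cst3 (Fract [:0,1:] 1) + cst3 ?c * cst3 (Fract [:0,1:] 1))"
    unfolding D_K_def power2_eq_square
    by (simp add: Dx_diff Dx_mult Dx_Y Dx_Z Dx_cst3 algebra_simps)
  also have "\<dots> = 0" unfolding cst3_mult[symmetric] cst3_add[symmetric] fract_half cst3_1 by simp
  finally show ?thesis .
qed

lemma rank_K: "der_rank (cst3 :: rat poly fract \<Rightarrow> ringBK) 3 D_K = 1"
  unfolding der_rank_def
proof (rule Least_equality)
  show "\<exists>xs. coord_sys (cst3 :: rat poly fract \<Rightarrow> ringBK) 3 xs \<and> set (take (3 - 1) xs) \<subseteq> ker D_K"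
    by (intro exI[of _ "[varT, varZ - cst3 (Fract 1 [:0,2:]) * varY ^ 2, varY]"])
      (simp add: coord_sys_def gen_K ker_def D_K_def Dx_T DK_Z'[unfolded D_K_def])
next
  fix r assume "\<exists>xs. coord_sys (cst3 :: rat poly fract \<Rightarrow> ringBK) 3 xs \<and> set (take (3 - r) xs) \<subseteq> ker D_K"
  then obtain xs where cs: "coord_sys (cst3 :: rat poly fract \<Rightarrow> ringBK) 3 xs" and k: "set (take (3 - r) xs) \<subseteq> ker D_K"
    by blast
  show "1 \<le> r"
  proof (rule ccontr)
    assume "\<not> 1 \<le> r"
    hence "r = 0" by simp
    moreover have "length xs = 3" using cs by (simp add: coord_sys_def)
    ultimately have "\<forall>s\<in>set xs. Dx (Fract [:0,1:] 1) s = 0" using k by (auto simp: ker_def D_K_def)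
    from all_ker[OF cs this, of varY] show False by (simp add: Dx_Y cst3_eq0 eq_fract Zero_fract_def)
  qed
qed


lemma deg0: "b \<in> alg_gen (cst3::'a::comm_ring_1 \<Rightarrow> _) {varT} \<Longrightarrow> degree b = 0"
proof (induct rule: alg_gen.induct)
  case (base a) thus ?case by (auto simp: cst3_def)
next
  case (gen s) thus ?case by (simp add: varT_def)
next
  case (add x y) thus ?case by (metis degree_add_le le_zero_eq)
next
  case (mult x y) thus ?case by (metis degree_mult_le le_zero_eq add_0)
qed

lemma T'_coeff: "coeff (varT - varY ^ 2 + 2 * cst3 [:0, 1:] * varZ :: ringB) 1 \<noteq> 0"
  by (simp add: varT_def varY_def varZ_def cst3_def power2_eq_square numeral_poly)

lemma T'_notin: "(varT - varY ^ 2 + 2 * cst3 [:0, 1:] * varZ :: ringB) \<notin> alg_gen cst3 {varT}"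
proof
  assume "(varT - varY ^ 2 + 2 * cst3 [:0, 1:] * varZ :: ringB) \<in> alg_gen cst3 {varT}"
  from deg0[OF this] have "coeff (varT - varY ^ 2 + 2 * cst3 [:0, 1:] * varZ :: ringB) 1 = 0"
    by (intro coeff_eq_0) simp
  with T'_coeff show False by simp
qed

theorem mainTheorem3:
  shows "der_rank (cst3 :: ringA \<Rightarrow> ringB) 3 D_A = 2
    \<and> der_rank (cst3 :: rat poly fract \<Rightarrow> ringBK) 3 D_K = 1
    \<and> [varT, varY, varZ] \<in> Gamma_D (cst3 :: ringA \<Rightarrow> ringB) 3 D_A
    \<and> [varT - varY ^ 2 + 2 * cst3 [:0, 1:] * varZ, varY, varZ] \<in> Gamma_D (cst3 :: ringA \<Rightarrow> ringB) 3 D_A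
    \<and> alg_gen (cst3 :: ringA \<Rightarrow> ringB) {varT} \<noteq> alg_gen cst3 {varT - varY ^ 2 + 2 * cst3 [:0, 1:] * varZ}
    \<and> \<not> rigid (cst3 :: ringA \<Rightarrow> ringB) 3 D_A"
proof -
  have g1: "[varT, varY, varZ] \<in> Gamma_D (cst3 :: ringA \<Rightarrow> ringB) 3 D_A"
    unfolding Gamma_D_def rank_A by (simp add: coord_TYZ ker_def D_A_def Dx_T)
  have g2: "[varT - varY ^ 2 + 2 * cst3 [:0, 1:] * varZ, varY, varZ] \<in> Gamma_D (cst3 :: ringA \<Rightarrow> ringB) 3 D_A"
    unfolding Gamma_D_def rank_A by (simp add: coord_sys_def gen_T' ker_def D_A_def DT')
  have ne: "alg_gen (cst3 :: ringA \<Rightarrow> ringB) {varT} \<noteq> alg_gen cst3 {varT - varY ^ 2 + 2 * cst3 [:0, 1:] * varZ}"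
    using T'_notin alg_gen.gen[of "varT - varY ^ 2 + 2 * cst3 [:0, 1:] * varZ" "{varT - varY ^ 2 + 2 * cst3 [:0, 1:] * varZ}" "cst3 :: ringA \<Rightarrow> ringB"]
    by auto
  have nr: "\<not> rigid (cst3 :: ringA \<Rightarrow> ringB) 3 D_A"
    unfolding rigid_def rank_A using g1 g2 ne by fastforce
  show ?thesis using rank_A rank_K g1 g2 ne nr by blast
qed

end
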